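(* In the setting described in the context, let $\Xi > 0$ be a constant with the following property (P): whenever $1 \leq k \leq q$, $x \in \Omega$ with $-2\Xi^{-1} \leq u_k(x) \leq 0$, and $a_0,\dots,a_{k-1} \geq 0$ with $a_i = 0$ for all $i$ with $u_i(x) \leq -2\Xi^{-1}$, one has $\sum_{i=0}^{k-1} a_i \leq \Xi |(\sum_{i=0}^{k-1} a_i N_i) \wedge N_k|$. Then for every $\gamma \in (0,\frac12)$ there exists $\bar\lambda$ such that for all $\lambda_0 \geq \bar\lambda$ the following holds: if $0 \leq j < k \leq q$ and $x \in \Omega$ satisfies $-\Xi^{-1} \leq \hat u_j(x) \leq 0$ and $-\Xi^{-1} \leq u_k(x) \leq 0$, then $|d\hat u_j \wedge du_k| \geq \Xi^{-1}$ at $x$.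
   Context: $n\ge3$; $u_0,\dots,u_q$ are non-constant linear (affine) functions on $\mathbb{R}^n$ and $\Omega=\bigcap_{m=0}^q\{u_m\le 0\}$ is a compact convex polytope with non-empty interior, such that: (a) for each $k$, $\{u_k>0\}\cap\bigcap_{m\neq k}\{u_m\le0\}\neq\emptyset$; (b) the Euclidean gradient of each $u_k$ is a unit vector $N_k$; (c) for $j<k$, if some $x\in\Omega$ has $u_j(x)=u_k(x)=0$ then $\langle N_j,N_k\rangle\le0$. Fix a smooth even $\eta:\mathbb{R}\to\mathbb{R}$ with $\eta(t)=|t|$ for $|t|\ge\frac12$ and $\eta''\ge0$. For $\gamma\in(0,\frac12)$, $\lambda_0>1$ put $\lambda_k=\gamma^{-k}\lambda_0$, $\hat u_0=u_0$, $\hat u_k=\frac12\big(\hat u_{k-1}+u_k+\lambda_k^{-1}\eta(\lambda_k(\hat u_{k-1}-u_k))\big)$ for $1\le k\le q$. For 1-forms/vectors, $|v\wedge w|$ denotes the Euclidean norm of the wedge product, $|v\wedge w|^2=|v|^2|w|^2-\langle v,w\rangle^2$. *)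

theory Defs
  imports "HOL-Analysis.Analysis"
begin

definition aff :: "'a::euclidean_space \<Rightarrow> real \<Rightarrow> 'a \<Rightarrow> real" where
  "aff N c x = N \<bullet> x + c"

definition wedge_norm :: "'a::euclidean_space \<Rightarrow> 'a \<Rightarrow> real" where
  "wedge_norm v w = sqrt ((norm v)\<^sup>2 * (norm w)\<^sup>2 - (v \<bullet> w)\<^sup>2)"

definition smooth_fun :: "(real \<Rightarrow> real) \<Rightarrow> bool" where
  "smooth_fun f \<longleftrightarrow> (\<exists>D. D 0 = f \<and> (\<forall>n t. (D n has_real_derivative D (Suc n) t) (at t)))"

fun hatu :: "(real \<Rightarrow> real) \<Rightarrow> (nat \<Rightarrow> 'a \<Rightarrow> real) \<Rightarrow> real \<Rightarrow> real \<Rightarrow> nat \<Rightarrow> 'a \<Rightarrow> real" where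
  "hatu \<eta> u \<gamma> lam0 0 x = u 0 x"
| "hatu \<eta> u \<gamma> lam0 (Suc k) x =
     (let l = lam0 / \<gamma> ^ Suc k; a = hatu \<eta> u \<gamma> lam0 k x; b = u (Suc k) x
      in (a + b + \<eta> (l * (a - b)) / l) / 2)"

end

theory Submission
  imports Defs
begin

lemma eta_facts:
  fixes \<eta> :: "real \<Rightarrow> real" and D :: "nat \<Rightarrow> real \<Rightarrow> real"
  assumes D0: "D 0 = \<eta>" and der: "\<And>n t. (D n has_real_derivative D (Suc n) t) (at t)"
    and eabs: "\<And>t. \<bar>t\<bar> \<ge> 1/2 \<Longrightarrow> \<eta> t = \<bar>t\<bar>"
    and conv: "\<And>t. deriv (deriv \<eta>) t \<ge> 0"
  shows "\<And>t. -1 \<le> D 1 t \<and> D 1 t \<le> 1"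
    and "\<And>t. D 1 t < 1 \<Longrightarrow> t \<le> 1/2"
    and "\<And>t. D 1 t > -1 \<Longrightarrow> t \<ge> -1/2"
    and "\<And>t. \<eta> t \<le> \<bar>t\<bar> + 3/2"
    and "\<And>t. (\<eta> has_real_derivative D 1 t) (at t)"
proof -
  show de: "\<And>t. (\<eta> has_real_derivative D 1 t) (at t)" using der[of 0] D0 by simp
  have "deriv \<eta> = D 1" using de by (intro ext DERIV_imp_deriv) 
  hence d2: "D 2 t \<ge> 0" for t using conv[of t] DERIV_imp_deriv[OF der[of 1 t]]
    by (simp add: numeral_2_eq_2)
  have mono: "D 1 a \<le> D 1 b" if "a \<le> b" for a b
    by (rule DERIV_nonneg_imp_nondecreasing[OF that]) (metis d2 der numeral_2_eq_2 One_nat_def)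
  have p1: "D 1 t = 1" if "t > 1/2" for t
  proof -
    have "((\<lambda>s. \<eta> s - s) has_real_derivative D 1 t - 1) (at t)"
      using de[of t] by (auto intro!: derivative_eq_intros)
    moreover have "\<forall>y. \<bar>t - y\<bar> < t - 1/2 \<longrightarrow> \<eta> t - t = \<eta> y - y"
      using that eabs by auto
    ultimately have "D 1 t - 1 = 0" using that by (intro DERIV_local_const) auto
    thus ?thesis by simp
  qed
  have m1: "D 1 t = -1" if "t < -1/2" for t
  proof -
    have "((\<lambda>s. \<eta> s + s) has_real_derivative D 1 t + 1) (at t)"
      using de[of t] by (auto intro!: derivative_eq_intros)
    moreover have "\<forall>y. \<bar>t - y\<bar> < -1/2 - t \<longrightarrow> \<eta> t + t = \<eta> y + y"
      using that eabs by auto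
    ultimately have "D 1 t + 1 = 0" using that by (intro DERIV_local_const) auto
    thus ?thesis by simp
  qed
  show b: "-1 \<le> D 1 t \<and> D 1 t \<le> 1" for t
  proof
    show "-1 \<le> D 1 t" using mono[of "min t (-1)" t] m1[of "min t (-1)"] by simp
    show "D 1 t \<le> 1" using mono[of t "max t 1"] p1[of "max t 1"] by simp
  qed
  show "D 1 t < 1 \<Longrightarrow> t \<le> 1/2" for t using p1[of t] by fastforce
  show "D 1 t > -1 \<Longrightarrow> t \<ge> -1/2" for t using m1[of t] by fastforce
  show "\<eta> t \<le> \<bar>t\<bar> + 3/2" for t
  proof (cases "\<bar>t\<bar> \<ge> 1/2")
    case True thus ?thesis using eabs by simp
  next
    case False
    hence "t < 1/2" by simp
    from MVT2[OF this, of \<eta> "D 1"] de obtain z where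
      "\<eta> (1/2) - \<eta> t = (1/2 - t) * D 1 z" by blast
    moreover have "\<eta> (1/2) = 1/2" using eabs by simp
    moreover have "(1/2 - t) * D 1 z \<ge> (1/2 - t) * (-1)"
      using b[of z] \<open>t < 1/2\<close> by (intro mult_left_mono) auto
    ultimately show ?thesis using False by simp
  qed
qed

lemma hatu_grad:
  fixes N :: "nat \<Rightarrow> 'a::euclidean_space" and c :: "nat \<Rightarrow> real"
    and \<eta> :: "real \<Rightarrow> real" and D1 :: "real \<Rightarrow> real"
  assumes b1: "\<And>t. -1 \<le> D1 t \<and> D1 t \<le> 1"
    and b2: "\<And>t. D1 t < 1 \<Longrightarrow> t \<le> 1/2"
    and b3: "\<And>t. D1 t > -1 \<Longrightarrow> t \<ge> -1/2"
    and b4: "\<And>t. \<eta> t \<le> \<bar>t\<bar> + 3/2"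
    and de: "\<And>t. (\<eta> has_real_derivative D1 t) (at t)"
    and g0: "0 < \<gamma>" and g1: "\<gamma> < 1" and l0: "lam0 > 0"
  shows "\<exists>a. (\<forall>i. a i \<ge> 0) \<and> (\<forall>i>k. a i = 0) \<and> (\<Sum>i\<le>k. a i) = 1 \<and>
    (hatu \<eta> (\<lambda>m. aff (N m) (c m)) \<gamma> lam0 k has_derivative (\<lambda>h. h \<bullet> (\<Sum>i\<le>k. a i *\<^sub>R N i))) (at x) \<and>
    (\<forall>i\<le>k. a i > 0 \<longrightarrow> aff (N i) (c i) x \<ge> hatu \<eta> (\<lambda>m. aff (N m) (c m)) \<gamma> lam0 k x - 2 * real k / lam0)"
proof (induction k)
  case 0
  have "(aff (N 0) (c 0) has_derivative (\<lambda>h. h \<bullet> N 0)) (at x)"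
    unfolding aff_def[abs_def] by (auto intro!: derivative_eq_intros simp: inner_commute)
  moreover have "hatu \<eta> (\<lambda>m. aff (N m) (c m)) \<gamma> lam0 0 = aff (N 0) (c 0)" by (rule ext) simp
  ultimately show ?case
    by (intro exI[of _ "\<lambda>i. if i = 0 then 1 else 0"]) auto
next
  case (Suc k)
  let ?u = "\<lambda>m. aff (N m) (c m)"
  let ?H = "hatu \<eta> ?u \<gamma> lam0"
  from Suc.IH obtain a where a0: "\<forall>i. a i \<ge> 0" and az: "\<forall>i>k. a i = 0" and as: "(\<Sum>i\<le>k. a i) = 1"
    and ad: "(?H k has_derivative (\<lambda>h. h \<bullet> (\<Sum>i\<le>k. a i *\<^sub>R N i))) (at x)"
    and ab: "\<forall>i\<le>k. a i > 0 \<longrightarrow> aff (N i) (c i) x \<ge> ?H k x - 2 * real k / lam0" by blast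
  define G where "G = (\<Sum>i\<le>k. a i *\<^sub>R N i)"
  define l where "l = lam0 / \<gamma> ^ Suc k"
  define A where "A = ?H k x"
  define B where "B = aff (N (Suc k)) (c (Suc k)) x"
  define t where "t = l * (A - B)"
  define s where "s = D1 t"
  have gp: "0 < \<gamma> ^ Suc k" using g0 by simp
  have gl: "\<gamma> ^ Suc k \<le> 1" using power_le_one[of \<gamma> "Suc k"] g0 g1 by linarith
  have lpos: "l > 0" unfolding l_def using gp l0 by simp
  have llam: "lam0 \<le> l" unfolding l_def using gp gl l0 by (simp add: le_divide_eq)
  have il: "1 / l \<le> 1 / lam0" using llam l0 by (intro divide_left_mono) auto
  have il0: "1 / lam0 > 0" using l0 by simp
  have Heq: "?H (Suc k) = (\<lambda>y. (?H k y + ?u (Suc k) y + \<eta> (l * (?H k y - ?u (Suc k) y)) / l) / 2)"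
    by (rule ext) (simp add: Let_def l_def)
  have Hx: "2 * ?H (Suc k) x = A + B + \<eta> t / l"
    by (simp add: Heq A_def B_def t_def)
  define a' where "a' = (\<lambda>i. if i \<le> k then (1 + s) / 2 * a i else if i = Suc k then (1 - s) / 2 else 0)"
  have sb: "-1 \<le> s" "s \<le> 1" using b1 unfolding s_def by auto
  have f1: "\<forall>i. a' i \<ge> 0" unfolding a'_def using sb a0 by auto
  have f2: "\<forall>i>Suc k. a' i = 0" unfolding a'_def by auto
  have f3: "(\<Sum>i\<le>Suc k. a' i) = 1"
  proof -
    have "(\<Sum>i\<le>Suc k. a' i) = (\<Sum>i\<le>k. a' i) + (1 - s) / 2" by (simp add: a'_def)
    also have "(\<Sum>i\<le>k. a' i) = (1 + s) / 2 * (\<Sum>i\<le>k. a i)"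
      by (simp add: a'_def sum_distrib_left)
    finally show ?thesis using as by (simp add: field_simps)
  qed
  have f4: "(\<Sum>i\<le>Suc k. a' i *\<^sub>R N i) = ((1 + s) / 2) *\<^sub>R G + ((1 - s) / 2) *\<^sub>R N (Suc k)"
  proof -
    have "(\<Sum>i\<le>Suc k. a' i *\<^sub>R N i) = (\<Sum>i\<le>k. a' i *\<^sub>R N i) + ((1 - s) / 2) *\<^sub>R N (Suc k)"
      by (simp add: a'_def)
    also have "(\<Sum>i\<le>k. a' i *\<^sub>R N i) = ((1 + s) / 2) *\<^sub>R G"
      by (simp add: a'_def G_def scaleR_sum_right)
    finally show ?thesis .
  qed
  have f5: "(?H (Suc k) has_derivative (\<lambda>h. h \<bullet> (((1 + s) / 2) *\<^sub>R G + ((1 - s) / 2) *\<^sub>R N (Suc k)))) (at x)"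
  proof -
    have hA: "(?H k has_derivative (\<lambda>h. h \<bullet> G)) (at x)" using ad G_def by simp
    have hB: "(?u (Suc k) has_derivative (\<lambda>h. h \<bullet> N (Suc k))) (at x)"
      unfolding aff_def[abs_def] by (auto intro!: derivative_eq_intros simp: inner_commute)
    have hT: "((\<lambda>y. l * (?H k y - ?u (Suc k) y)) has_derivative (\<lambda>h. l * (h \<bullet> G - h \<bullet> N (Suc k)))) (at x)"
      by (intro has_derivative_mult_right has_derivative_diff hA hB)
    have hE0: "(\<eta> has_derivative (\<lambda>h. s * h)) (at t)"
      using de[of t] unfolding s_def has_field_derivative_def by simp
    have tt: "(\<lambda>y. l * (?H k y - ?u (Suc k) y)) x = t" by (simp add: t_def A_def B_def)
    have hE: "((\<lambda>y. \<eta> (l * (?H k y - ?u (Suc k) y))) has_derivative (\<lambda>h. s * (l * (h \<bullet> G - h \<bullet> N (Suc k))))) (at x)"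
      using has_derivative_compose[OF hT, of \<eta> "\<lambda>h. s * h"] hE0 tt by simp
    have hE': "((\<lambda>y. \<eta> (l * (?H k y - ?u (Suc k) y)) / l) has_derivative (\<lambda>h. s * (l * (h \<bullet> G - h \<bullet> N (Suc k))) / l)) (at x)"
      by (intro bounded_linear.has_derivative[OF bounded_linear_divide] hE) 
    show ?thesis
      unfolding Heq
      apply (rule has_derivative_eq_rhs)
       apply (rule bounded_linear.has_derivative[OF bounded_linear_divide has_derivative_add[OF has_derivative_add[OF hA hB] hE']])
      using lpos by (auto simp: inner_add_right field_simps)
  qed
  have f6: "\<forall>i\<le>Suc k. a' i > 0 \<longrightarrow> aff (N i) (c i) x \<ge> ?H (Suc k) x - 2 * real (Suc k) / lam0"
  proof (intro allI impI)
    fix i assume i: "i \<le> Suc k" and ap: "a' i > 0"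
    have et: "\<eta> t / l \<le> \<bar>A - B\<bar> + 3/2 * (1/l)"
    proof -
      have "\<eta> t / l \<le> (\<bar>t\<bar> + 3/2) / l" using b4[of t] lpos by (intro divide_right_mono) auto
      also have "\<dots> = \<bar>A - B\<bar> + 3/2 * (1/l)" using lpos by (simp add: t_def abs_mult add_divide_distrib)
      finally show ?thesis .
    qed
    have tl: "t / l = A - B" using lpos by (simp add: t_def)
    show "aff (N i) (c i) x \<ge> ?H (Suc k) x - 2 * real (Suc k) / lam0"
    proof (cases "i = Suc k")
      case True
      hence "s < 1" using ap by (simp add: a'_def)
      hence "t \<le> 1/2" using b2 s_def by simp
      hence "t / l \<le> (1/2) * (1/l)" using lpos divide_right_mono[of t "1/2" l] by simp
      hence "A - B \<le> (1/2) * (1/l)" using tl by simp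
      moreover have "2 * real (Suc k) / lam0 \<ge> 2 * (1/lam0)" using l0 by (simp add: divide_right_mono)
      moreover have "A + B + \<bar>A - B\<bar> \<le> 2 * B + 1/l" using \<open>A - B \<le> (1/2) * (1/l)\<close> using lpos by (cases "A \<le> B") (auto simp: abs_if)
      ultimately have "?H (Suc k) x \<le> B + 2 * (1/lam0)" using Hx et il il0 by linarith
      thus ?thesis using \<open>2 * real (Suc k) / lam0 \<ge> 2 * (1/lam0)\<close> unfolding True B_def by linarith
    next
      case False
      hence ik: "i \<le> k" using i by simp
      hence "s > -1" "a i > 0" using ap sb a0 by (auto simp: a'_def zero_less_mult_iff) 
      hence "t \<ge> -1/2" using b3 s_def by simp
      hence "t / l \<ge> (-1/2) * (1/l)" using lpos divide_right_mono[of "-1/2" t l] by simp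
      hence "B - A \<le> (1/2) * (1/l)" using tl by simp
      moreover have "aff (N i) (c i) x \<ge> A - 2 * real k / lam0" using ab ik \<open>a i > 0\<close> A_def by simp
      moreover have "2 * real (Suc k) / lam0 = 2 * real k / lam0 + 2 * (1/lam0)" by (simp add: add_divide_distrib)
      moreover have "A + B + \<bar>A - B\<bar> \<le> 2 * A + 1/l" using \<open>B - A \<le> (1/2) * (1/l)\<close> using lpos by (cases "A \<le> B") (auto simp: abs_if)
      ultimately have "?H (Suc k) x \<le> A + 2 * (1/lam0)" and "aff (N i) (c i) x \<ge> A - 2 * real k / lam0" using Hx et il il0 by linarith+
      thus ?thesis using \<open>2 * real (Suc k) / lam0 = 2 * real k / lam0 + 2 * (1/lam0)\<close> by linarith
    qed
  qed
  show ?case apply (rule exI[of _ a']) unfolding f4 using f1 f2 f3 f5 f6 by blast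
qed
theorem lemma2p11:
  fixes N :: "nat \<Rightarrow> 'a::euclidean_space" and c :: "nat \<Rightarrow> real"
    and q :: nat and \<eta> :: "real \<Rightarrow> real" and \<Xi> :: real and \<Omega> :: "'a set"
  assumes dim: "DIM('a) \<ge> 3"
    and unit: "\<And>m. m \<le> q \<Longrightarrow> norm (N m) = 1"
    and Omega_def: "\<Omega> = {x. \<forall>m\<le>q. aff (N m) (c m) x \<le> 0}"
    and compact: "compact \<Omega>" and nonempty_int: "interior \<Omega> \<noteq> {}"
    and cond_a: "\<And>k. k \<le> q \<Longrightarrow>
        \<exists>x. aff (N k) (c k) x > 0 \<and> (\<forall>m\<le>q. m \<noteq> k \<longrightarrow> aff (N m) (c m) x \<le> 0)"
    and cond_c: "\<And>j k. j < k \<Longrightarrow> k \<le> q \<Longrightarrow>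
        (\<exists>x\<in>\<Omega>. aff (N j) (c j) x = 0 \<and> aff (N k) (c k) x = 0) \<Longrightarrow> N j \<bullet> N k \<le> 0"
    and eta_smooth: "smooth_fun \<eta>"
    and eta_even: "\<And>t. \<eta> (- t) = \<eta> t"
    and eta_abs: "\<And>t. \<bar>t\<bar> \<ge> 1/2 \<Longrightarrow> \<eta> t = \<bar>t\<bar>"
    and eta_convex: "\<And>t. deriv (deriv \<eta>) t \<ge> 0"
    and Xi_pos: "\<Xi> > 0"
    and P: "\<And>k x a. 1 \<le> k \<Longrightarrow> k \<le> q \<Longrightarrow> x \<in> \<Omega> \<Longrightarrow>
        - 2 / \<Xi> \<le> aff (N k) (c k) x \<Longrightarrow> aff (N k) (c k) x \<le> 0 \<Longrightarrow>
        (\<forall>i<k. a i \<ge> 0) \<Longrightarrow> (\<forall>i<k. aff (N i) (c i) x \<le> - 2 / \<Xi> \<longrightarrow> a i = 0) \<Longrightarrow>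
        (\<Sum>i<k. a i) \<le> \<Xi> * wedge_norm (\<Sum>i<k. a i *\<^sub>R N i) (N k)"
  shows "\<forall>\<gamma>. 0 < \<gamma> \<and> \<gamma> < 1/2 \<longrightarrow>
    (\<exists>lambar. \<forall>lam0. lam0 > 1 \<and> lam0 \<ge> lambar \<longrightarrow>
      (\<forall>j k x. j < k \<and> k \<le> q \<and> x \<in> \<Omega> \<and>
          - 1 / \<Xi> \<le> hatu \<eta> (\<lambda>m. aff (N m) (c m)) \<gamma> lam0 j x \<and>
          hatu \<eta> (\<lambda>m. aff (N m) (c m)) \<gamma> lam0 j x \<le> 0 \<and>
          - 1 / \<Xi> \<le> aff (N k) (c k) x \<and> aff (N k) (c k) x \<le> 0 \<longrightarrow>
        (\<exists>g. (GDERIV (hatu \<eta> (\<lambda>m. aff (N m) (c m)) \<gamma> lam0 j) x :> g) \<and>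
             wedge_norm g (N k) \<ge> 1 / \<Xi>)))"
  proof (intro allI impI)
  fix \<gamma> :: real assume g: "0 < \<gamma> \<and> \<gamma> < 1/2"
  obtain D where D0: "D 0 = \<eta>" and der: "\<And>n t. (D n has_real_derivative D (Suc n) t) (at t)"
    using eta_smooth unfolding smooth_fun_def by blast
  note ef = eta_facts[OF D0 der eta_abs eta_convex]
  let ?u = "\<lambda>m. aff (N m) (c m)"
  show "\<exists>lambar. \<forall>lam0. lam0 > 1 \<and> lam0 \<ge> lambar \<longrightarrow>
      (\<forall>j k x. j < k \<and> k \<le> q \<and> x \<in> \<Omega> \<and>
          - 1 / \<Xi> \<le> hatu \<eta> ?u \<gamma> lam0 j x \<and>
          hatu \<eta> ?u \<gamma> lam0 j x \<le> 0 \<and>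
          - 1 / \<Xi> \<le> aff (N k) (c k) x \<and> aff (N k) (c k) x \<le> 0 \<longrightarrow>
        (\<exists>g. (GDERIV (hatu \<eta> ?u \<gamma> lam0 j) x :> g) \<and> wedge_norm g (N k) \<ge> 1 / \<Xi>))"
  proof (intro exI[of _ "2 * real q * \<Xi> + 1"] allI impI, elim conjE)
    fix lam0 j k x
    assume l1: "lam0 > 1" and lb: "2 * real q * \<Xi> + 1 \<le> lam0" and jk: "j < k" and kq: "k \<le> q"
      and xO: "x \<in> \<Omega>" and h1: "- 1 / \<Xi> \<le> hatu \<eta> ?u \<gamma> lam0 j x"
      and h2: "hatu \<eta> ?u \<gamma> lam0 j x \<le> 0"
      and k1: "- 1 / \<Xi> \<le> aff (N k) (c k) x" and k2: "aff (N k) (c k) x \<le> 0"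
    obtain a where a0: "\<forall>i. a i \<ge> 0" and az: "\<forall>i>j. a i = 0" and as: "(\<Sum>i\<le>j. a i) = 1"
      and ad: "(hatu \<eta> ?u \<gamma> lam0 j has_derivative (\<lambda>h. h \<bullet> (\<Sum>i\<le>j. a i *\<^sub>R N i))) (at x)"
      and ab: "\<forall>i\<le>j. a i > 0 \<longrightarrow> aff (N i) (c i) x \<ge> hatu \<eta> ?u \<gamma> lam0 j x - 2 * real j / lam0"
      using hatu_grad[OF ef(1) ef(2) ef(3) ef(4) ef(5), of \<gamma> lam0 j N c x] g l1 by auto
    have sub: "{..j} \<subseteq> {..<k}" using jk by auto
    have s1: "(\<Sum>i<k. a i) = (\<Sum>i\<le>j. a i)"
      by (rule sum.mono_neutral_right[OF _ sub]) (use az in auto)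
    have s2: "(\<Sum>i<k. a i *\<^sub>R N i) = (\<Sum>i\<le>j. a i *\<^sub>R N i)"
      by (rule sum.mono_neutral_right[OF _ sub]) (use az in auto)
    have small: "2 * real j / lam0 < 1 / \<Xi>"
    proof -
      have "2 * real j * \<Xi> < lam0" using lb jk kq Xi_pos
        by (smt (verit, best) mult_right_mono of_nat_le_iff less_imp_le_nat order.strict_trans2)
      thus ?thesis using Xi_pos l1 by (simp add: field_simps)
    qed
    have cond: "\<forall>i<k. aff (N i) (c i) x \<le> - 2 / \<Xi> \<longrightarrow> a i = 0"
    proof (intro allI impI)
      fix i assume ik: "i < k" and le: "aff (N i) (c i) x \<le> - 2 / \<Xi>"
      show "a i = 0"
      proof (rule ccontr)
        assume "a i \<noteq> 0"
        hence ap: "a i > 0" using a0[rule_format, of i] by linarith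
        hence "i \<le> j" using az ap by (metis less_irrefl not_le)
        hence "aff (N i) (c i) x \<ge> hatu \<eta> ?u \<gamma> lam0 j x - 2 * real j / lam0" using ab ap by blast
        moreover have "- 2 / \<Xi> = - 1 / \<Xi> - 1 / \<Xi>" by simp
        ultimately show False using le h1 small by linarith
      qed
    qed
    have k1': "- 2 / \<Xi> \<le> aff (N k) (c k) x"
    proof -
      have "- 2 / \<Xi> \<le> - 1 / \<Xi>" using Xi_pos by (simp add: divide_right_mono)
      thus ?thesis using k1 by linarith
    qed
    have "(\<Sum>i<k. a i) \<le> \<Xi> * wedge_norm (\<Sum>i<k. a i *\<^sub>R N i) (N k)"
      using P[of k x a] jk kq xO k1' k2 a0 cond by auto
    hence "1 \<le> \<Xi> * wedge_norm (\<Sum>i\<le>j. a i *\<^sub>R N i) (N k)" using s1 s2 as by simp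
    hence "wedge_norm (\<Sum>i\<le>j. a i *\<^sub>R N i) (N k) \<ge> 1 / \<Xi>" using Xi_pos
      by (simp add: divide_le_eq mult.commute)
    moreover have "GDERIV (hatu \<eta> ?u \<gamma> lam0 j) x :> (\<Sum>i\<le>j. a i *\<^sub>R N i)"
      unfolding gderiv_def using ad by simp
    ultimately show "\<exists>g. (GDERIV (hatu \<eta> ?u \<gamma> lam0 j) x :> g) \<and> wedge_norm g (N k) \<ge> 1 / \<Xi>"
      by blast
  qed
qed

end
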